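(* Let $0<r<|\xi|_c$ and let $\lambda(r)$ be as defined in the context. Then the function $\lambda:(0,|\xi|_c)\to(0,\infty)$ satisfies $$\lambda(r)\le\frac{b\,g\,(\rho_+-\rho_-)}{4\mu_-}\quad\text{for all }r\in(0,|\xi|_c).$$ Moreover $\lim_{r\to0}\lambda(r)=0$ (for $\sigma_\pm\ge0$), and $\lim_{r\to|\xi|_c}\lambda(r)=0$ if $\sigma_->0$.
   Context: Fix $b,g>0$, $\rho_+>\rho_->0$, $\mu_\pm>0$, $\sigma_\pm\ge0$ (either both zero or both positive); $[\![\rho]\!]=\rho_+-\rho_-$. Let $\rho(x_3)=\rho_+,\mu(x_3)=\mu_+$ for $x_3\in(0,1)$ and $\rho_-,\mu_-$ for $x_3\in(-b,0)$. Let $X=\{\psi\in H^2((-b,1)):\psi(-b)=\psi'(-b)=0\}$. For $r>0,s>0,\psi\in X$: $E(\psi;r,s)=\frac12\int_{-b}^1s\mu(4r^2|\psi'|^2+|r^2\psi+\psi''|^2)dx_3+\frac12r^2(\sigma_+r^2+g\rho_+)|\psi(1)|^2+\frac12r^2(\sigma_-r^2-g[\![\rho]\!])|\psi(0)|^2$, $J(\psi;r)=\frac12\int_{-b}^1\rho(r^2|\psi|^2+|\psi'|^2)dx_3$, $\alpha(r;s)=\inf\{E(\psi;r,s):\psi\in X,J(\psi;r)=1\}$. $|\xi|_c=\sqrt{g[\![\rho]\!]/\sigma_-}$ if $\sigma_->0$, $|\xi|_c=\infty$ if $\sigma_-=0$. For $0<r<|\xi|_c$, $\lambda(r)$ denotes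 the unique $s>0$ such that $\alpha(r;s)<0$ and $s=\sqrt{-\alpha(r;s)}$ (existence and uniqueness hold). *)

theory Defs
  imports "HOL-Analysis.Analysis"
begin

text \<open>Piecewise constant coefficients: value on (0,1) is the plus value, on (-b,0) the minus value
  (the value at the single point 0 is irrelevant for the integrals).\<close>
definition pw :: "real \<Rightarrow> real \<Rightarrow> real \<Rightarrow> real" where
  "pw vp vm x = (if x > 0 then vp else vm)"

text \<open>Elements of X, i.e. psi in H^2((-b,1)) with psi(-b) = psi'(-b) = 0, represented by
  psi together with its derivative psi1 (continuous) and second weak derivative psi2 (in L^2):
  psi1(x) = int_{-b}^x psi2, psi(x) = int_{-b}^x psi1 on [-b,1].\<close>
definition inX :: "real \<Rightarrow> (real \<Rightarrow> real) \<Rightarrow> (real \<Rightarrow> real) \<Rightarrow> (real \<Rightarrow> real) \<Rightarrow> bool" where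
  "inX b \<psi> \<psi>1 \<psi>2 \<longleftrightarrow>
     set_integrable lborel {-b..1} \<psi>2 \<and>
     set_integrable lborel {-b..1} (\<lambda>x. (\<psi>2 x)\<^sup>2) \<and>
     (\<forall>x\<in>{-b..1}. \<psi>1 x = (LINT t:{-b..x}|lborel. \<psi>2 t)) \<and>
     (\<forall>x\<in>{-b..1}. \<psi> x = (LINT t:{-b..x}|lborel. \<psi>1 t))"

definition Efun :: "real \<Rightarrow> real \<Rightarrow> real \<Rightarrow> real \<Rightarrow> real \<Rightarrow> real \<Rightarrow> real \<Rightarrow> real \<Rightarrow>
    (real \<Rightarrow> real) \<Rightarrow> (real \<Rightarrow> real) \<Rightarrow> (real \<Rightarrow> real) \<Rightarrow> real \<Rightarrow> real \<Rightarrow> real" where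
  "Efun b g \<rho>p \<rho>m \<mu>p \<mu>m \<sigma>p \<sigma>m \<psi> \<psi>1 \<psi>2 r s =
     1/2 * (LINT x:{-b..1}|lborel. s * pw \<mu>p \<mu>m x *
              (4 * r\<^sup>2 * (\<psi>1 x)\<^sup>2 + (r\<^sup>2 * \<psi> x + \<psi>2 x)\<^sup>2))
   + 1/2 * r\<^sup>2 * (\<sigma>p * r\<^sup>2 + g * \<rho>p) * (\<psi> 1)\<^sup>2
   + 1/2 * r\<^sup>2 * (\<sigma>m * r\<^sup>2 - g * (\<rho>p - \<rho>m)) * (\<psi> 0)\<^sup>2"

definition Jfun :: "real \<Rightarrow> real \<Rightarrow> real \<Rightarrow> (real \<Rightarrow> real) \<Rightarrow> (real \<Rightarrow> real) \<Rightarrow> real \<Rightarrow> real" where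
  "Jfun b \<rho>p \<rho>m \<psi> \<psi>1 r =
     1/2 * (LINT x:{-b..1}|lborel. pw \<rho>p \<rho>m x * (r\<^sup>2 * (\<psi> x)\<^sup>2 + (\<psi>1 x)\<^sup>2))"

definition alpha :: "real \<Rightarrow> real \<Rightarrow> real \<Rightarrow> real \<Rightarrow> real \<Rightarrow> real \<Rightarrow> real \<Rightarrow> real \<Rightarrow> real \<Rightarrow> real \<Rightarrow> real" where
  "alpha b g \<rho>p \<rho>m \<mu>p \<mu>m \<sigma>p \<sigma>m r s =
     Inf {Efun b g \<rho>p \<rho>m \<mu>p \<mu>m \<sigma>p \<sigma>m \<psi> \<psi>1 \<psi>2 r s | \<psi> \<psi>1 \<psi>2.
            inX b \<psi> \<psi>1 \<psi>2 \<and> Jfun b \<rho>p \<rho>m \<psi> \<psi>1 r = 1}"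

definition lam :: "real \<Rightarrow> real \<Rightarrow> real \<Rightarrow> real \<Rightarrow> real \<Rightarrow> real \<Rightarrow> real \<Rightarrow> real \<Rightarrow> real \<Rightarrow> real" where
  "lam b g \<rho>p \<rho>m \<mu>p \<mu>m \<sigma>p \<sigma>m r =
     (THE s. s > 0 \<and> alpha b g \<rho>p \<rho>m \<mu>p \<mu>m \<sigma>p \<sigma>m r s < 0 \<and>
             s = sqrt (- alpha b g \<rho>p \<rho>m \<mu>p \<mu>m \<sigma>p \<sigma>m r s))"

text \<open>r < |xi|_c, where |xi|_c = sqrt(g[rho]/sigma_-) if sigma_- > 0 and infinity otherwise.\<close>
definition below_crit :: "real \<Rightarrow> real \<Rightarrow> real \<Rightarrow> real \<Rightarrow> real \<Rightarrow> bool" where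
  "below_crit g \<rho>p \<rho>m \<sigma>m r \<longleftrightarrow> \<sigma>m = 0 \<or> r < sqrt (g * (\<rho>p - \<rho>m) / \<sigma>m)"

end

theory Submission
  imports Defs
begin


definition alf :: "'i set \<Rightarrow> ('i \<Rightarrow> real) \<Rightarrow> ('i \<Rightarrow> real) \<Rightarrow> real \<Rightarrow> real" where
  "alf I A B s = Inf ((\<lambda>i. A i + s * B i) ` I)"

locale absal =
  fixes I :: "'i set" and A B :: "'i \<Rightarrow> real" and L :: real
  assumes ne: "I \<noteq> {}" and lb: "\<And>i. i \<in> I \<Longrightarrow> A i \<ge> -L"
    and Bnn: "\<And>i. i \<in> I \<Longrightarrow> B i \<ge> 0"
begin

abbreviation al where "al \<equiv> alf I A B"

lemma bdd: "s \<ge> 0 \<Longrightarrow> bdd_below ((\<lambda>i. A i + s * B i) ` I)"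
  unfolding bdd_below_def
proof (intro exI[of _ "-L"] ballI)
  fix y assume "s \<ge> 0" "y \<in> (\<lambda>i. A i + s * B i) ` I"
  then obtain i where "i \<in> I" "y = A i + s * B i" by auto
  then show "-L \<le> y" using lb[of i] Bnn[of i] \<open>s \<ge> 0\<close> by (smt (verit) mult_nonneg_nonneg)
qed

lemma al_le: "s \<ge> 0 \<Longrightarrow> i \<in> I \<Longrightarrow> al s \<le> A i + s * B i"
  unfolding alf_def by (rule cInf_lower) (auto intro: bdd)

lemma al_ge: assumes "\<And>i. i \<in> I \<Longrightarrow> c \<le> A i + s * B i" shows "c \<le> al s"
  unfolding alf_def using ne assms by (auto intro!: cInf_greatest)

lemma al_lb: "s \<ge> 0 \<Longrightarrow> al s \<ge> -L"
  by (rule al_ge) (smt (verit) lb Bnn mult_nonneg_nonneg)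

lemma al_mono: "0 \<le> s \<Longrightarrow> s \<le> t \<Longrightarrow> al s \<le> al t"
proof (rule al_ge)
  fix i assume "0 \<le> s" "s \<le> t" "i \<in> I"
  then have "al s \<le> A i + s * B i" by (rule_tac al_le) auto
  also have "\<dots> \<le> A i + t * B i" using Bnn[OF \<open>i\<in>I\<close>] \<open>s \<le> t\<close> by (simp add: mult_right_mono)
  finally show "al s \<le> A i + t * B i" .
qed

lemma al_convex: "convex_on {0<..} (\<lambda>s. - al s)"
proof (rule convex_onI)
  show "convex {0::real<..}" by simp
  fix t x y :: real assume t: "0 < t" "t < 1" and xy: "x \<in> {0<..}" "y \<in> {0<..}"
  have "(1 - t) * al x + t * al y \<le> al ((1 - t) *\<^sub>R x + t *\<^sub>R y)"
  proof (rule al_ge)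
    fix i assume i: "i \<in> I"
    have "(1 - t) * al x \<le> (1 - t) * (A i + x * B i)"
      using al_le[of x i] xy i t by (intro mult_left_mono) auto
    moreover have "t * al y \<le> t * (A i + y * B i)"
      using al_le[of y i] xy i t by (intro mult_left_mono) auto
    ultimately show "(1 - t) * al x + t * al y \<le> A i + ((1 - t) *\<^sub>R x + t *\<^sub>R y) * B i"
      by (simp add: algebra_simps)
  qed
  then show "- al ((1 - t) *\<^sub>R x + t *\<^sub>R y) \<le> (1 - t) * - al x + t * - al y" by simp
qed

lemma al_cont: "continuous_on {0<..} al"
proof -
  have "continuous_on {0<..} (\<lambda>s. - al s)"
    by (rule convex_on_continuous) (auto intro: al_convex)
  then have "continuous_on {0<..} (\<lambda>s. - (- al s))" by (rule continuous_on_minus)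
  then show ?thesis by simp
qed

lemma root_bound: "s > 0 \<Longrightarrow> s = sqrt (- al s) \<Longrightarrow> s\<^sup>2 \<le> L"
proof -
  assume s: "s > 0" "s = sqrt (- al s)"
  have "al s \<le> 0"
  proof (rule ccontr)
    assume "\<not> al s \<le> 0" then have "sqrt (- al s) < 0" by simp
    with s show False by simp
  qed
  have "s\<^sup>2 = (sqrt (- al s))\<^sup>2" using s by simp
  also have "\<dots> = - al s" using \<open>al s \<le> 0\<close> by (intro real_sqrt_pow2) auto
  finally show ?thesis using al_lb[of s] s by simp
qed

lemma root_exists:
  assumes i0: "i0 \<in> I" "A i0 < 0"
  shows "\<exists>!s. s > 0 \<and> al s < 0 \<and> s = sqrt (- al s)"
proof -
  define f where "f s = s\<^sup>2 + al s" for s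
  define s0 where "s0 = min 1 (- A i0 / (2 * (1 + B i0)))"
  have B0: "B i0 \<ge> 0" using Bnn i0 by auto
  have "- A i0 / (2 * (1 + B i0)) > 0" using i0 B0 by (intro divide_pos_pos) auto
  then have s0p: "s0 > 0" by (simp add: s0_def)
  have s01: "s0 \<le> 1" by (simp add: s0_def)
  have "s0 * (1 + B i0) \<le> - A i0 / 2"
  proof -
    have "s0 \<le> - A i0 / (2 * (1 + B i0))" by (simp add: s0_def)
    then have "s0 * (1 + B i0) \<le> - A i0 / (2 * (1 + B i0)) * (1 + B i0)"
      using B0 by (intro mult_right_mono) auto
    also have "\<dots> = - A i0 / 2" using B0 by (simp add: field_simps)
    finally show ?thesis .
  qed
  moreover have "s0\<^sup>2 \<le> s0" using s0p s01 by (simp add: power2_eq_square mult_le_cancel_left1)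
  moreover have "s0 * (1 + B i0) = s0 + s0 * B i0" by (simp add: algebra_simps)
  moreover have "al s0 \<le> A i0 + s0 * B i0" using al_le[of s0 i0] i0 s0p by auto
  ultimately have "f s0 < 0" using i0 unfolding f_def by linarith
  define s1 where "s1 = sqrt (max L 0) + 1"
  have s1ge: "s1\<^sup>2 > L"
  proof -
    have "s1\<^sup>2 \<ge> (sqrt (max L 0))\<^sup>2 + 1" unfolding s1_def by (simp add: power2_eq_square algebra_simps)
    then show ?thesis by simp
  qed
  have s1p: "s1 \<ge> 1" by (simp add: s1_def)
  have "f s1 > 0" using al_lb[of s1] s1ge s1p unfolding f_def by simp
  have cf: "continuous_on {s0..s1} f" unfolding f_def
    by (intro continuous_intros continuous_on_subset[OF al_cont]) (use s0p in auto)
  obtain s where s: "s0 \<le> s" "s \<le> s1" "f s = 0"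
    using IVT'[of f s0 0 s1] \<open>f s0 < 0\<close> \<open>f s1 > 0\<close> s01 s1p cf by force
  have sp: "s > 0" using s s0p by auto
  have als: "al s = - s\<^sup>2" using s(3) unfolding f_def by simp
  have P: "s > 0 \<and> al s < 0 \<and> s = sqrt (- al s)" using sp als by simp
  show ?thesis
  proof (rule ex1I[of _ s])
    show "s > 0 \<and> al s < 0 \<and> s = sqrt (- al s)" by (rule P)
    fix t assume t: "t > 0 \<and> al t < 0 \<and> t = sqrt (- al t)"
    then have "t\<^sup>2 = (sqrt (- al t))\<^sup>2" by simp
    also have "\<dots> = - al t" using t by (intro real_sqrt_pow2) auto
    finally have alt: "al t = - t\<^sup>2" by simp
    show "t = s"
    proof (rule ccontr)
      assume "t \<noteq> s"
      then consider "t < s" | "s < t" by linarith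
      then show False
      proof cases
        case 1
        then have "al t \<le> al s" using t by (intro al_mono) auto
        then have "s\<^sup>2 \<le> t\<^sup>2" using als alt by simp
        moreover have "t\<^sup>2 < s\<^sup>2" using 1 t by (intro power_strict_mono) auto
        ultimately show False by simp
      next
        case 2
        then have "al s \<le> al t" using sp by (intro al_mono) auto
        then have "t\<^sup>2 \<le> s\<^sup>2" using als alt by simp
        moreover have "s\<^sup>2 < t\<^sup>2" using 2 sp by (intro power_strict_mono) auto
        ultimately show False by simp
      qed
    qed
  qed
qed

end


lemma cont_indef:
  fixes f F :: "real \<Rightarrow> real"
  assumes fi: "set_integrable lborel {a..c} f" and F: "\<forall>x\<in>{a..c}. F x = (LINT t:{a..x}|lborel. f t)"
  shows "continuous_on {a..c} F"
proof -
  have fi': "f integrable_on {a..c}" using set_borel_integral_eq_integral(1)[OF fi] .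
  have c: "continuous_on {a..c} (\<lambda>x. integral {a..x} f)" by (rule indefinite_integral_continuous_1[OF fi'])
  have eq: "F x = integral {a..x} f" if x: "x \<in> {a..c}" for x
  proof -
    have "set_integrable lborel {a..x} f" by (rule set_integrable_subset[OF fi]) (use x in auto)
    then show ?thesis using F x set_borel_integral_eq_integral(2) by metis
  qed
  show ?thesis using c by (subst continuous_on_cong[OF refl eq]) auto
qed

lemma inX_cont:
  assumes "inX b \<psi> \<psi>1 \<psi>2"
  shows "continuous_on {-b..1} \<psi>1" "continuous_on {-b..1} \<psi>"
proof -
  show c1: "continuous_on {-b..1} \<psi>1"
    using assms unfolding inX_def by (intro cont_indef[of "-b" 1 \<psi>2]) auto
  show "continuous_on {-b..1} \<psi>"
    using assms borel_integrable_atLeastAtMost'[OF c1] unfolding inX_def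
    by (intro cont_indef[of "-b" 1 \<psi>1]) auto
qed

lemma cs_ineq:
  fixes h :: "real \<Rightarrow> real"
  assumes hc: "continuous_on {a..c} h" and ac: "a < c"
  shows "(LINT x:{a..c}|lborel. h x)\<^sup>2 \<le> (c - a) * (LINT x:{a..c}|lborel. (h x)\<^sup>2)"
proof -
  define I where "I = (LINT x:{a..c}|lborel. h x)"
  define t where "t = I / (c - a)"
  have i1: "set_integrable lborel {a..c} h" by (rule borel_integrable_atLeastAtMost'[OF hc])
  have i2: "set_integrable lborel {a..c} (\<lambda>x. (h x)\<^sup>2)"
    by (rule borel_integrable_atLeastAtMost') (intro continuous_intros hc)
  have i3: "set_integrable lborel {a..c} (\<lambda>x. 2 * t * h x)" using i1 by simp
  have i4: "set_integrable lborel {a..c} (\<lambda>x. t\<^sup>2)"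
    by (rule borel_integrable_atLeastAtMost') (intro continuous_intros)
  have "(LINT x:{a..c}|lborel. 2 * t * h x - t\<^sup>2) \<le> (LINT x:{a..c}|lborel. (h x)\<^sup>2)"
  proof (rule set_integral_mono)
    show "set_integrable lborel {a..c} (\<lambda>x. 2 * t * h x - t\<^sup>2)" using i3 i4 by (rule set_integral_diff)
    show "set_integrable lborel {a..c} (\<lambda>x. (h x)\<^sup>2)" by (rule i2)
    fix x show "2 * t * h x - t\<^sup>2 \<le> (h x)\<^sup>2"
      using sum_squares_ge_zero[of "h x - t" 0] by (simp add: power2_eq_square algebra_simps)
  qed
  moreover have "(LINT x:{a..c}|lborel. 2 * t * h x - t\<^sup>2) = 2 * t * I - t\<^sup>2 * (c - a)"
  proof -
    have "(LINT x:{a..c}|lborel. 2 * t * h x - t\<^sup>2) = (LINT x:{a..c}|lborel. 2 * t * h x) - (LINT x:{a..c}|lborel. t\<^sup>2)"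
      using i3 i4 by (rule set_integral_diff)
    also have "(LINT x:{a..c}|lborel. t\<^sup>2) = t\<^sup>2 * (c - a)"
      using ac by (subst set_integral_const) auto
    finally show ?thesis unfolding I_def by simp
  qed
  moreover have "2 * t * I - t\<^sup>2 * (c - a) = I\<^sup>2 / (c - a)"
  proof -
    have tc: "t * (c - a) = I" using ac by (simp add: t_def)
    have "t\<^sup>2 * (c - a) = t * I" using tc by (simp add: power2_eq_square mult.assoc)
    moreover have "t * I = I\<^sup>2 / (c - a)" by (simp add: t_def power2_eq_square)
    ultimately show ?thesis by simp
  qed
  ultimately have "I\<^sup>2 / (c - a) \<le> (LINT x:{a..c}|lborel. (h x)\<^sup>2)" by simp
  then show ?thesis using ac unfolding I_def by (simp add: field_simps)
qed

lemma inX_psi0: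
  assumes X: "inX b \<psi> \<psi>1 \<psi>2" and b: "b > 0"
  shows "(\<psi> 0)\<^sup>2 \<le> b * (LINT x:{-b..0}|lborel. (\<psi>1 x)\<^sup>2)"
proof -
  have "\<psi> 0 = (LINT t:{-b..0}|lborel. \<psi>1 t)" using X b unfolding inX_def by auto
  moreover have "continuous_on {-b..0} \<psi>1"
    by (rule continuous_on_subset[OF inX_cont(1)[OF X]]) auto
  ultimately show ?thesis using cs_ineq[of "-b" 0 \<psi>1] b by simp
qed

lemma pw_meas[measurable]: "pw vp vm \<in> borel_measurable lborel"
  unfolding pw_def by measurable

lemma pw_integrable:
  assumes q: "set_integrable lborel S q"
  shows "set_integrable lborel S (\<lambda>x. pw vp vm x * q x)"
  unfolding set_integrable_def
proof (rule Bochner_Integration.integrable_bound)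
  show "integrable lborel (\<lambda>x. (\<bar>vp\<bar> + \<bar>vm\<bar>) * (indicator S x *\<^sub>R q x))"
    using q unfolding set_integrable_def by simp
  have "(\<lambda>x. indicator S x *\<^sub>R q x) \<in> borel_measurable lborel"
    using q unfolding set_integrable_def by (rule borel_measurable_integrable)
  then have "(\<lambda>x. pw vp vm x * (indicator S x *\<^sub>R q x)) \<in> borel_measurable lborel" by measurable
  then show "(\<lambda>x. indicator S x *\<^sub>R (pw vp vm x * q x)) \<in> borel_measurable lborel"
    by (simp add: algebra_simps)
  show "AE x in lborel. norm (indicator S x *\<^sub>R (pw vp vm x * q x)) \<le> norm ((\<bar>vp\<bar> + \<bar>vm\<bar>) * (indicator S x *\<^sub>R q x))"
    by (auto simp: pw_def abs_mult split: split_indicator intro!: mult_right_mono)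
qed

lemma pw_lower:
  assumes q: "set_integrable lborel {-b..1} q" and h: "set_integrable lborel {-b..0} h"
    and hq: "\<And>x. x \<in> {-b..1} \<Longrightarrow> 0 \<le> h x \<and> h x \<le> q x" and vp: "0 < vp" and vm: "0 < vm"
  shows "vm * (LINT x:{-b..0}|lborel. h x) \<le> (LINT x:{-b..1}|lborel. pw vp vm x * q x)"
proof -
  have "vm * (LINT x:{-b..0}|lborel. h x) = (LINT x:{-b..0}|lborel. vm * h x)" by simp
  also have "\<dots> = integral\<^sup>L lborel (\<lambda>x. indicator {-b..0} x *\<^sub>R (vm * h x))"
    unfolding set_lebesgue_integral_def ..
  also have "\<dots> \<le> integral\<^sup>L lborel (\<lambda>x. indicator {-b..1} x *\<^sub>R (pw vp vm x * q x))"
  proof (rule integral_mono)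
    have "set_integrable lborel {-b..0} (\<lambda>x. vm * h x)" using h by (rule set_integrable_mult_right)
    then show "integrable lborel (\<lambda>x. indicator {-b..0} x *\<^sub>R (vm * h x))"
      unfolding set_integrable_def .
    show "integrable lborel (\<lambda>x. indicator {-b..1} x *\<^sub>R (pw vp vm x * q x))"
      using pw_integrable[OF q] unfolding set_integrable_def .
    fix x
    show "indicator {-b..0} x *\<^sub>R (vm * h x) \<le> indicator {-b..1} x *\<^sub>R (pw vp vm x * q x)"
    proof (cases "x \<in> {-b..0}")
      case True
      then have "x \<in> {-b..1}" by auto
      then show ?thesis using True hq[of x] vm by (auto simp: pw_def intro!: mult_left_mono)
    next
      case False
      have "0 \<le> indicator {-b..1} x *\<^sub>R (pw vp vm x * q x)"
        using hq[of x] vp vm by (auto simp: pw_def split: split_indicator)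
      then show ?thesis using False by simp
    qed
  qed
  also have "\<dots> = (LINT x:{-b..1}|lborel. pw vp vm x * q x)"
    unfolding set_lebesgue_integral_def ..
  finally show ?thesis .
qed



lemma inX_Q_int:
  assumes X: "inX b \<psi> \<psi>1 \<psi>2"
  shows "set_integrable lborel {-b..1} (\<lambda>x. 4 * r\<^sup>2 * (\<psi>1 x)\<^sup>2 + (r\<^sup>2 * \<psi> x + \<psi>2 x)\<^sup>2)"
proof -
  let ?S = "{-b..1::real}"
  have c1: "continuous_on ?S \<psi>1" and c0: "continuous_on ?S \<psi>" using inX_cont[OF X] by auto
  have i1: "set_integrable lborel ?S (\<lambda>x. 4 * r\<^sup>2 * (\<psi>1 x)\<^sup>2)"
    by (rule borel_integrable_atLeastAtMost') (intro continuous_intros c1)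
  have i0: "set_integrable lborel ?S (\<lambda>x. (\<psi> x)\<^sup>2)"
    by (rule borel_integrable_atLeastAtMost') (intro continuous_intros c0)
  have i0': "set_integrable lborel ?S \<psi>"
    by (rule borel_integrable_atLeastAtMost') (intro continuous_intros c0)
  have i2: "set_integrable lborel ?S \<psi>2" and i22: "set_integrable lborel ?S (\<lambda>x. (\<psi>2 x)\<^sup>2)"
    using X unfolding inX_def by auto
  have m1: "(\<lambda>x. indicator ?S x *\<^sub>R \<psi> x) \<in> borel_measurable lborel"
    using i0' unfolding set_integrable_def by (rule borel_measurable_integrable)
  have m2: "(\<lambda>x. indicator ?S x *\<^sub>R \<psi>2 x) \<in> borel_measurable lborel"
    using i2 unfolding set_integrable_def by (rule borel_measurable_integrable)
  have i3: "set_integrable lborel ?S (\<lambda>x. (r\<^sup>2 * \<psi> x + \<psi>2 x)\<^sup>2)"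
    unfolding set_integrable_def
  proof (rule Bochner_Integration.integrable_bound)
    have a: "integrable lborel (\<lambda>x. indicator ?S x *\<^sub>R (\<psi> x)\<^sup>2)" using i0 unfolding set_integrable_def .
    have b: "integrable lborel (\<lambda>x. indicator ?S x *\<^sub>R (\<psi>2 x)\<^sup>2)" using i22 unfolding set_integrable_def .
    show "integrable lborel (\<lambda>x. 2 * r^4 * (indicator ?S x *\<^sub>R (\<psi> x)\<^sup>2) + 2 * (indicator ?S x *\<^sub>R (\<psi>2 x)\<^sup>2))"
      using a b by (intro Bochner_Integration.integrable_add integrable_mult_right)
    have "(\<lambda>x. (r\<^sup>2 * (indicator ?S x *\<^sub>R \<psi> x) + indicator ?S x *\<^sub>R \<psi>2 x)\<^sup>2) \<in> borel_measurable lborel"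
      using m1 m2 by measurable
    moreover have "(\<lambda>x. (r\<^sup>2 * (indicator ?S x *\<^sub>R \<psi> x) + indicator ?S x *\<^sub>R \<psi>2 x)\<^sup>2)
        = (\<lambda>x. indicator ?S x *\<^sub>R (r\<^sup>2 * \<psi> x + \<psi>2 x)\<^sup>2)"
      by (auto split: split_indicator)
    ultimately show "(\<lambda>x. indicator ?S x *\<^sub>R (r\<^sup>2 * \<psi> x + \<psi>2 x)\<^sup>2) \<in> borel_measurable lborel" by simp
    show "AE x in lborel. norm (indicator ?S x *\<^sub>R (r\<^sup>2 * \<psi> x + \<psi>2 x)\<^sup>2)
        \<le> norm (2 * r^4 * (indicator ?S x *\<^sub>R (\<psi> x)\<^sup>2) + 2 * (indicator ?S x *\<^sub>R (\<psi>2 x)\<^sup>2))"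
    proof (rule AE_I2)
      fix x
      have "(r\<^sup>2 * \<psi> x + \<psi>2 x)\<^sup>2 \<le> 2 * r^4 * (\<psi> x)\<^sup>2 + 2 * (\<psi>2 x)\<^sup>2"
        using sum_squares_ge_zero[of "r\<^sup>2 * \<psi> x - \<psi>2 x" 0]
        by (simp add: power2_eq_square algebra_simps power4_eq_xxxx)
      moreover have "0 \<le> 2 * r^4 * (\<psi> x)\<^sup>2 + 2 * (\<psi>2 x)\<^sup>2" by simp
      ultimately show "norm (indicator ?S x *\<^sub>R (r\<^sup>2 * \<psi> x + \<psi>2 x)\<^sup>2)
        \<le> norm (2 * r^4 * (indicator ?S x *\<^sub>R (\<psi> x)\<^sup>2) + 2 * (indicator ?S x *\<^sub>R (\<psi>2 x)\<^sup>2))"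
        by (auto split: split_indicator)
    qed
  qed
  show ?thesis using i1 i3 by (rule set_integral_add)
qed

lemma J_lower:
  assumes X: "inX b \<psi> \<psi>1 \<psi>2" and b: "b > 0" and rp: "\<rho>p > 0" and rm: "\<rho>m > 0"
  shows "\<rho>m / 2 * (LINT x:{-b..0}|lborel. (\<psi>1 x)\<^sup>2) \<le> Jfun b \<rho>p \<rho>m \<psi> \<psi>1 r"
proof -
  have c1: "continuous_on {-b..1} \<psi>1" and c0: "continuous_on {-b..1} \<psi>" using inX_cont[OF X] by auto
  have q: "set_integrable lborel {-b..1} (\<lambda>x. r\<^sup>2 * (\<psi> x)\<^sup>2 + (\<psi>1 x)\<^sup>2)"
    by (rule borel_integrable_atLeastAtMost') (intro continuous_intros c0 c1)
  have h: "set_integrable lborel {-b..0} (\<lambda>x. (\<psi>1 x)\<^sup>2)"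
    by (rule borel_integrable_atLeastAtMost') (intro continuous_intros continuous_on_subset[OF c1], auto)
  have "\<rho>m * (LINT x:{-b..0}|lborel. (\<psi>1 x)\<^sup>2) \<le> (LINT x:{-b..1}|lborel. pw \<rho>p \<rho>m x * (r\<^sup>2 * (\<psi> x)\<^sup>2 + (\<psi>1 x)\<^sup>2))"
    using q h rp rm by (intro pw_lower) auto
  then show ?thesis unfolding Jfun_def by simp
qed

lemma B_lower:
  assumes X: "inX b \<psi> \<psi>1 \<psi>2" and b: "b > 0" and mp: "\<mu>p > 0" and mm: "\<mu>m > 0"
  shows "\<mu>m * (4 * r\<^sup>2) * (LINT x:{-b..0}|lborel. (\<psi>1 x)\<^sup>2) \<le>
     (LINT x:{-b..1}|lborel. pw \<mu>p \<mu>m x * (4 * r\<^sup>2 * (\<psi>1 x)\<^sup>2 + (r\<^sup>2 * \<psi> x + \<psi>2 x)\<^sup>2))"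
proof -
  have c1: "continuous_on {-b..1} \<psi>1" using inX_cont[OF X] by auto
  have h: "set_integrable lborel {-b..0} (\<lambda>x. 4 * r\<^sup>2 * (\<psi>1 x)\<^sup>2)"
    by (rule borel_integrable_atLeastAtMost') (intro continuous_intros continuous_on_subset[OF c1], auto)
  have "\<mu>m * (LINT x:{-b..0}|lborel. 4 * r\<^sup>2 * (\<psi>1 x)\<^sup>2) \<le>
     (LINT x:{-b..1}|lborel. pw \<mu>p \<mu>m x * (4 * r\<^sup>2 * (\<psi>1 x)\<^sup>2 + (r\<^sup>2 * \<psi> x + \<psi>2 x)\<^sup>2))"
    using inX_Q_int[OF X] h mp mm by (intro pw_lower) auto
  then show ?thesis by (simp add: mult.assoc)
qed

lemma E_decomp:
  "Efun b g \<rho>p \<rho>m \<mu>p \<mu>m \<sigma>p \<sigma>m \<psi> \<psi>1 \<psi>2 r s =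
     Efun b g \<rho>p \<rho>m \<mu>p \<mu>m \<sigma>p \<sigma>m \<psi> \<psi>1 \<psi>2 r 0 +
     s * (1/2 * (LINT x:{-b..1}|lborel. pw \<mu>p \<mu>m x * (4 * r\<^sup>2 * (\<psi>1 x)\<^sup>2 + (r\<^sup>2 * \<psi> x + \<psi>2 x)\<^sup>2)))"
proof -
  have "(LINT x:{-b..1}|lborel. s * pw \<mu>p \<mu>m x * (4 * r\<^sup>2 * (\<psi>1 x)\<^sup>2 + (r\<^sup>2 * \<psi> x + \<psi>2 x)\<^sup>2))
     = s * (LINT x:{-b..1}|lborel. pw \<mu>p \<mu>m x * (4 * r\<^sup>2 * (\<psi>1 x)\<^sup>2 + (r\<^sup>2 * \<psi> x + \<psi>2 x)\<^sup>2))"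
    by (simp add: mult.assoc)
  then show ?thesis unfolding Efun_def by (simp add: algebra_simps)
qed

lemma inX_scale:
  assumes X: "inX b \<psi> \<psi>1 \<psi>2"
  shows "inX b (\<lambda>x. c * \<psi> x) (\<lambda>x. c * \<psi>1 x) (\<lambda>x. c * \<psi>2 x)"
proof -
  have "set_integrable lborel {-b..1} (\<lambda>x. c\<^sup>2 * (\<psi>2 x)\<^sup>2)"
    using X unfolding inX_def by (intro set_integrable_mult_right) auto
  then have "set_integrable lborel {-b..1} (\<lambda>x. (c * \<psi>2 x)\<^sup>2)" by (simp add: power_mult_distrib)
  then show ?thesis using X unfolding inX_def by auto
qed

lemma J_scale: "Jfun b \<rho>p \<rho>m (\<lambda>x. c * \<psi> x) (\<lambda>x. c * \<psi>1 x) r = c\<^sup>2 * Jfun b \<rho>p \<rho>m \<psi> \<psi>1 r"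
proof -
  have "(\<lambda>x. pw \<rho>p \<rho>m x * (r\<^sup>2 * (c * \<psi> x)\<^sup>2 + (c * \<psi>1 x)\<^sup>2)) = (\<lambda>x. c\<^sup>2 * (pw \<rho>p \<rho>m x * (r\<^sup>2 * (\<psi> x)\<^sup>2 + (\<psi>1 x)\<^sup>2)))"
    by (simp add: power_mult_distrib algebra_simps)
  then show ?thesis unfolding Jfun_def by simp
qed

lemma E_scale: "Efun b g \<rho>p \<rho>m \<mu>p \<mu>m \<sigma>p \<sigma>m (\<lambda>x. c * \<psi> x) (\<lambda>x. c * \<psi>1 x) (\<lambda>x. c * \<psi>2 x) r s
   = c\<^sup>2 * Efun b g \<rho>p \<rho>m \<mu>p \<mu>m \<sigma>p \<sigma>m \<psi> \<psi>1 \<psi>2 r s"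
proof -
  have "(\<lambda>x. s * pw \<mu>p \<mu>m x * (4 * r\<^sup>2 * (c * \<psi>1 x)\<^sup>2 + (r\<^sup>2 * (c * \<psi> x) + c * \<psi>2 x)\<^sup>2))
    = (\<lambda>x. c\<^sup>2 * (s * pw \<mu>p \<mu>m x * (4 * r\<^sup>2 * (\<psi>1 x)\<^sup>2 + (r\<^sup>2 * \<psi> x + \<psi>2 x)\<^sup>2)))"
    by (simp add: power2_eq_square algebra_simps)
  then have ie: "(LINT x:{-b..1}|lborel. s * pw \<mu>p \<mu>m x * (4 * r\<^sup>2 * (c * \<psi>1 x)\<^sup>2 + (r\<^sup>2 * (c * \<psi> x) + c * \<psi>2 x)\<^sup>2))
    = c\<^sup>2 * (LINT x:{-b..1}|lborel. s * pw \<mu>p \<mu>m x * (4 * r\<^sup>2 * (\<psi>1 x)\<^sup>2 + (r\<^sup>2 * \<psi> x + \<psi>2 x)\<^sup>2))"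
    by (simp only: set_integral_mult_right)
  show ?thesis unfolding Efun_def ie by (simp add: power_mult_distrib algebra_simps)
qed



lemma ftc_helper:
  fixes F f :: "real \<Rightarrow> real"
  assumes d: "\<And>t. (F has_real_derivative f t) (at t)" and c: "continuous_on {a..x} f" and ax: "a \<le> x"
  shows "(LINT t:{a..x}|lborel. f t) = F x - F a"
proof -
  have "(LBINT t=a..x. f t) = F x - F a"
  proof (rule interval_integral_FTC_finite)
    show "continuous_on {min a x..max a x} f" using c ax by simp
    fix t show "(F has_vector_derivative f t) (at t within {min a x..max a x})"
      using d[of t] by (simp add: has_real_derivative_iff_has_vector_derivative has_vector_derivative_at_within)
  qed
  then show ?thesis using interval_integral_Icc[OF ax, of f] by simp
qed

lemma test_inX:
  assumes b: "b > 0"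
  shows "inX b (\<lambda>x. (x+b)\<^sup>2*(1-x)) (\<lambda>x. 2*(x+b)*(1-x) - (x+b)\<^sup>2) (\<lambda>x. 2 - 6*x - 4*b)"
  unfolding inX_def
proof (intro conjI ballI)
  show "set_integrable lborel {-b..1} (\<lambda>x. 2 - 6*x - 4*b)"
    by (rule borel_integrable_atLeastAtMost') (intro continuous_intros)
  show "set_integrable lborel {-b..1} (\<lambda>x. (2 - 6*x - 4*b)\<^sup>2)"
    by (rule borel_integrable_atLeastAtMost') (intro continuous_intros)
  fix x :: real assume x: "x \<in> {-b..1}"
  have d1: "((\<lambda>x. 2*(x+b)*(1-x) - (x+b)\<^sup>2) has_real_derivative (2 - 6*t - 4*b)) (at t)" for t
    by (auto intro!: derivative_eq_intros simp: algebra_simps)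
  have d2: "((\<lambda>x. (x+b)\<^sup>2*(1-x)) has_real_derivative (2*(t+b)*(1-t) - (t+b)\<^sup>2)) (at t)" for t
    by (auto intro!: derivative_eq_intros simp: algebra_simps)
  show "2*(x+b)*(1-x) - (x+b)\<^sup>2 = (LINT t:{-b..x}|lborel. 2 - 6*t - 4*b)"
    using ftc_helper[OF d1, of "-b" x] x by (simp add: continuous_intros)
  show "(x+b)\<^sup>2*(1-x) = (LINT t:{-b..x}|lborel. 2*(t+b)*(1-t) - (t+b)\<^sup>2)"
    using ftc_helper[OF d2, of "-b" x] x by (simp add: continuous_intros)
qed



lemma I0_nonneg: fixes f :: "real \<Rightarrow> real" shows "0 \<le> (LINT x:S|lborel. (f x)\<^sup>2)"
  unfolding set_lebesgue_integral_def
  by (rule Bochner_Integration.integral_nonneg_AE) (auto split: split_indicator)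

lemma key:
  fixes b g \<rho>p \<rho>m \<mu>p \<mu>m \<sigma>p \<sigma>m r :: real
  assumes b: "b > 0" and g: "g > 0" and rr: "\<rho>p > \<rho>m" "\<rho>m > 0" and mu: "\<mu>p > 0" "\<mu>m > 0"
    and sp: "\<sigma>p \<ge> 0" and r: "0 < r" and kap: "\<sigma>m * r\<^sup>2 - g*(\<rho>p-\<rho>m) < 0"
  shows "0 < lam b g \<rho>p \<rho>m \<mu>p \<mu>m \<sigma>p \<sigma>m r \<and>
         (lam b g \<rho>p \<rho>m \<mu>p \<mu>m \<sigma>p \<sigma>m r)\<^sup>2 \<le> r\<^sup>2 * (g*(\<rho>p-\<rho>m) - \<sigma>m*r\<^sup>2) * b / \<rho>m \<and>
         lam b g \<rho>p \<rho>m \<mu>p \<mu>m \<sigma>p \<sigma>m r \<le> (g*(\<rho>p-\<rho>m) - \<sigma>m*r\<^sup>2) * b / (4*\<mu>m)"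
proof -
  define \<kappa> where "\<kappa> = \<sigma>m * r\<^sup>2 - g*(\<rho>p-\<rho>m)"
  have kn: "\<kappa> < 0" using kap by (simp add: \<kappa>_def)
  define L where "L = r\<^sup>2 * (- \<kappa>) * b / \<rho>m"
  define I where "I = {(\<psi>,\<psi>1,\<psi>2). inX b \<psi> \<psi>1 \<psi>2 \<and> Jfun b \<rho>p \<rho>m \<psi> \<psi>1 r = 1}"
  define A where "A = (\<lambda>(\<psi>,\<psi>1,\<psi>2). Efun b g \<rho>p \<rho>m \<mu>p \<mu>m \<sigma>p \<sigma>m \<psi> \<psi>1 \<psi>2 r 0)"
  define B where "B = (\<lambda>(\<psi>,\<psi>1,\<psi>2). 1/2 * (LINT x:{-b..1}|lborel. pw \<mu>p \<mu>m x *
          (4 * r\<^sup>2 * (\<psi>1 x)\<^sup>2 + (r\<^sup>2 * \<psi> x + \<psi>2 x)\<^sup>2)))"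
  have Edec: "Efun b g \<rho>p \<rho>m \<mu>p \<mu>m \<sigma>p \<sigma>m \<psi> \<psi>1 \<psi>2 r s = A (\<psi>,\<psi>1,\<psi>2) + s * B (\<psi>,\<psi>1,\<psi>2)"
    for \<psi> \<psi>1 \<psi>2 s unfolding A_def B_def prod.case by (rule E_decomp)
  have alpha_eq: "alpha b g \<rho>p \<rho>m \<mu>p \<mu>m \<sigma>p \<sigma>m r s = alf I A B s" for s
  proof -
    have "{Efun b g \<rho>p \<rho>m \<mu>p \<mu>m \<sigma>p \<sigma>m \<psi> \<psi>1 \<psi>2 r s | \<psi> \<psi>1 \<psi>2.
            inX b \<psi> \<psi>1 \<psi>2 \<and> Jfun b \<rho>p \<rho>m \<psi> \<psi>1 r = 1} = (\<lambda>i. A i + s * B i) ` I"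
    proof (rule set_eqI, rule iffI)
      fix x assume "x \<in> {Efun b g \<rho>p \<rho>m \<mu>p \<mu>m \<sigma>p \<sigma>m \<psi> \<psi>1 \<psi>2 r s | \<psi> \<psi>1 \<psi>2.
            inX b \<psi> \<psi>1 \<psi>2 \<and> Jfun b \<rho>p \<rho>m \<psi> \<psi>1 r = 1}"
      then obtain \<psi> \<psi>1 \<psi>2 where "x = Efun b g \<rho>p \<rho>m \<mu>p \<mu>m \<sigma>p \<sigma>m \<psi> \<psi>1 \<psi>2 r s"
        "inX b \<psi> \<psi>1 \<psi>2" "Jfun b \<rho>p \<rho>m \<psi> \<psi>1 r = 1" by blast
      then show "x \<in> (\<lambda>i. A i + s * B i) ` I"
        by (intro image_eqI[where x="(\<psi>,\<psi>1,\<psi>2)"]) (simp_all add: Edec I_def)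
    next
      fix x assume "x \<in> (\<lambda>i. A i + s * B i) ` I"
      then obtain i where i: "i \<in> I" "x = A i + s * B i" by blast
      obtain \<psi> \<psi>1 \<psi>2 where ii: "i = (\<psi>,\<psi>1,\<psi>2)" by (cases i) auto
      have "inX b \<psi> \<psi>1 \<psi>2" "Jfun b \<rho>p \<rho>m \<psi> \<psi>1 r = 1" using i(1) unfolding ii I_def by auto
      moreover have "x = Efun b g \<rho>p \<rho>m \<mu>p \<mu>m \<sigma>p \<sigma>m \<psi> \<psi>1 \<psi>2 r s" using i(2) unfolding ii Edec by simp
      ultimately show "x \<in> {Efun b g \<rho>p \<rho>m \<mu>p \<mu>m \<sigma>p \<sigma>m \<psi> \<psi>1 \<psi>2 r s | \<psi> \<psi>1 \<psi>2.
            inX b \<psi> \<psi>1 \<psi>2 \<and> Jfun b \<rho>p \<rho>m \<psi> \<psi>1 r = 1}" by blast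
    qed
    then show ?thesis unfolding alpha_def alf_def by simp
  qed
  have A_eq: "A (\<psi>,\<psi>1,\<psi>2) = 1/2 * r\<^sup>2 * (\<sigma>p * r\<^sup>2 + g * \<rho>p) * (\<psi> 1)\<^sup>2 + 1/2 * r\<^sup>2 * \<kappa> * (\<psi> 0)\<^sup>2"
    for \<psi> \<psi>1 \<psi>2 unfolding A_def Efun_def \<kappa>_def by simp
  have adm: "1/2 * r\<^sup>2 * \<kappa> * b * (LINT x:{-b..0}|lborel. (\<psi>1 x)\<^sup>2) \<le> A (\<psi>,\<psi>1,\<psi>2)
      \<and> -L \<le> A (\<psi>,\<psi>1,\<psi>2)
      \<and> 2 * \<mu>m * r\<^sup>2 * (LINT x:{-b..0}|lborel. (\<psi>1 x)\<^sup>2) \<le> B (\<psi>,\<psi>1,\<psi>2)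
      \<and> 0 \<le> (LINT x:{-b..0}|lborel. (\<psi>1 x)\<^sup>2)"
    if i: "(\<psi>,\<psi>1,\<psi>2) \<in> I" for \<psi> \<psi>1 \<psi>2
  proof -
    define I0 where "I0 = (LINT x:{-b..0}|lborel. (\<psi>1 x)\<^sup>2)"
    have X: "inX b \<psi> \<psi>1 \<psi>2" and J: "Jfun b \<rho>p \<rho>m \<psi> \<psi>1 r = 1" using i by (auto simp: I_def)
    have I0n: "0 \<le> I0" unfolding I0_def by (rule I0_nonneg)
    have "\<rho>m / 2 * I0 \<le> 1" using J_lower[OF X b, of \<rho>p \<rho>m r] rr J unfolding I0_def by simp
    then have I0le: "I0 \<le> 2 / \<rho>m" using rr by (simp add: field_simps)
    have p0: "(\<psi> 0)\<^sup>2 \<le> b * I0" using inX_psi0[OF X b] unfolding I0_def .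
    have P: "0 \<le> 1/2 * r\<^sup>2 * (\<sigma>p * r\<^sup>2 + g * \<rho>p) * (\<psi> 1)\<^sup>2" using sp g rr by simp
    have "\<kappa> * (b * I0) \<le> \<kappa> * (\<psi> 0)\<^sup>2" using p0 kn by (intro mult_left_mono_neg) auto
    then have "1/2 * r\<^sup>2 * (\<kappa> * (b * I0)) \<le> 1/2 * r\<^sup>2 * (\<kappa> * (\<psi> 0)\<^sup>2)" by (rule mult_left_mono) auto
    then have a1: "1/2 * r\<^sup>2 * \<kappa> * b * I0 \<le> A (\<psi>,\<psi>1,\<psi>2)" using P unfolding A_eq by (simp add: algebra_simps)
    have "\<kappa> * b * (2 / \<rho>m) \<le> \<kappa> * b * I0" using I0le kn b by (intro mult_left_mono_neg) (auto simp: mult_nonpos_nonneg)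
    then have "1/2 * r\<^sup>2 * (\<kappa> * b * (2 / \<rho>m)) \<le> 1/2 * r\<^sup>2 * (\<kappa> * b * I0)" by (rule mult_left_mono) auto
    moreover have "1/2 * r\<^sup>2 * (\<kappa> * b * (2 / \<rho>m)) = -L" unfolding L_def by (simp add: field_simps)
    ultimately have "-L \<le> 1/2 * r\<^sup>2 * (\<kappa> * b * I0)" by linarith
    moreover have "1/2 * r\<^sup>2 * (\<kappa> * b * I0) = 1/2 * r\<^sup>2 * \<kappa> * b * I0" by (simp add: mult.assoc)
    ultimately have a2: "-L \<le> A (\<psi>,\<psi>1,\<psi>2)" using a1 by linarith
    have "\<mu>m * (4 * r\<^sup>2) * I0 \<le> (LINT x:{-b..1}|lborel. pw \<mu>p \<mu>m x *
          (4 * r\<^sup>2 * (\<psi>1 x)\<^sup>2 + (r\<^sup>2 * \<psi> x + \<psi>2 x)\<^sup>2))"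
      using B_lower[OF X b mu] unfolding I0_def .
    then have a3: "2 * \<mu>m * r\<^sup>2 * I0 \<le> B (\<psi>,\<psi>1,\<psi>2)" unfolding B_def by simp
    show ?thesis using a1 a2 a3 I0n unfolding I0_def by simp
  qed
  define t0 where "t0 = (\<lambda>x::real. (x+b)\<^sup>2*(1-x))"
  define t1 where "t1 = (\<lambda>x::real. 2*(x+b)*(1-x) - (x+b)\<^sup>2)"
  define t2 where "t2 = (\<lambda>x::real. 2 - 6*x - 4*b)"
  have TX: "inX b t0 t1 t2" unfolding t0_def t1_def t2_def by (rule test_inX[OF b])
  define Jt where "Jt = Jfun b \<rho>p \<rho>m t0 t1 r"
  have "(t0 0)\<^sup>2 \<le> b * (LINT x:{-b..0}|lborel. (t1 x)\<^sup>2)" by (rule inX_psi0[OF TX b])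
  moreover have "(t0 0)\<^sup>2 = b^4" by (simp add: t0_def)
  ultimately have "b^4 \<le> b * (LINT x:{-b..0}|lborel. (t1 x)\<^sup>2)" by simp
  moreover have "\<rho>m / 2 * (LINT x:{-b..0}|lborel. (t1 x)\<^sup>2) \<le> Jt"
    unfolding Jt_def using J_lower[OF TX b, of \<rho>p \<rho>m r] rr by simp
  moreover have "0 < b^4" using b by simp
  ultimately have Jtp: "Jt > 0"
  proof -
    assume h1: "b^4 \<le> b * (LINT x:{-b..0}|lborel. (t1 x)\<^sup>2)"
      and h2: "\<rho>m / 2 * (LINT x:{-b..0}|lborel. (t1 x)\<^sup>2) \<le> Jt" and h3: "0 < b^4"
    have "0 < b * (LINT x:{-b..0}|lborel. (t1 x)\<^sup>2)" using h1 h3 by linarith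
    then have "0 < (LINT x:{-b..0}|lborel. (t1 x)\<^sup>2)" using b by (simp add: zero_less_mult_iff)
    then have "0 < \<rho>m / 2 * (LINT x:{-b..0}|lborel. (t1 x)\<^sup>2)" using rr by simp
    then show ?thesis using h2 by linarith
  qed
  define c where "c = 1 / sqrt Jt"
  have c2: "c\<^sup>2 * Jt = 1" using Jtp by (simp add: c_def power_divide)
  have c2p: "c\<^sup>2 > 0" using Jtp by (simp add: c_def)
  let ?i0 = "((\<lambda>x. c * t0 x), (\<lambda>x. c * t1 x), (\<lambda>x. c * t2 x))"
  have i0I: "?i0 \<in> I" unfolding I_def using inX_scale[OF TX] J_scale c2 unfolding Jt_def by auto
  have e1: "A ?i0 = c\<^sup>2 * A (t0,t1,t2)" unfolding A_def using E_scale by simp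
  have "A (t0,t1,t2) = 1/2 * r\<^sup>2 * \<kappa> * b^4" unfolding A_eq by (simp add: t0_def)
  moreover have "1/2 * r\<^sup>2 * \<kappa> * b^4 < 0"
  proof -
    have "0 < 1/2 * r\<^sup>2 * b^4" using r b by simp
    then have "(1/2 * r\<^sup>2 * b^4) * \<kappa> < 0" using kn by (rule mult_pos_neg)
    then show ?thesis by (simp add: ac_simps)
  qed
  ultimately have e2: "A (t0,t1,t2) < 0" by simp
  have A0: "A ?i0 < 0" unfolding e1 by (rule mult_pos_neg[OF c2p e2])
  interpret absal I A B L
  proof
    show "I \<noteq> {}" using i0I by auto
    fix i assume "i \<in> I"
    then obtain \<psi> \<psi>1 \<psi>2 where i: "i = (\<psi>,\<psi>1,\<psi>2)" "(\<psi>,\<psi>1,\<psi>2) \<in> I" by (cases i) auto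
    have "0 \<le> 2 * \<mu>m * r\<^sup>2 * (LINT x:{-b..0}|lborel. (\<psi>1 x)\<^sup>2)" using mu I0_nonneg by simp
    then show "-L \<le> A i" "0 \<le> B i" using adm[OF i(2)] unfolding i(1) by auto
  qed
  have ex: "\<exists>!s. s > 0 \<and> alf I A B s < 0 \<and> s = sqrt (- alf I A B s)" by (rule root_exists[OF i0I A0])
  have lam_eq: "lam b g \<rho>p \<rho>m \<mu>p \<mu>m \<sigma>p \<sigma>m r = (THE s. s > 0 \<and> alf I A B s < 0 \<and> s = sqrt (- alf I A B s))"
    unfolding lam_def alpha_eq ..
  define s where "s = lam b g \<rho>p \<rho>m \<mu>p \<mu>m \<sigma>p \<sigma>m r"
  have S: "s > 0 \<and> alf I A B s < 0 \<and> s = sqrt (- alf I A B s)"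
    unfolding s_def lam_eq by (rule theI'[OF ex])
  have sL: "s\<^sup>2 \<le> L" using root_bound S by auto
  have sK: "s \<le> - \<kappa> * b / (4 * \<mu>m)"
  proof (rule ccontr)
    assume "\<not> ?thesis"
    then have sgt: "- \<kappa> * b / (4 * \<mu>m) < s" by simp
    then have sgt': "- \<kappa> * b < 4 * \<mu>m * s" using mu by (simp add: field_simps)
    have "0 \<le> alf I A B s"
    proof (rule al_ge)
      fix i assume "i \<in> I"
      then obtain \<psi> \<psi>1 \<psi>2 where i: "i = (\<psi>,\<psi>1,\<psi>2)" "(\<psi>,\<psi>1,\<psi>2) \<in> I" by (cases i) auto
      define I0 where "I0 = (LINT x:{-b..0}|lborel. (\<psi>1 x)\<^sup>2)"
      have h: "1/2 * r\<^sup>2 * \<kappa> * b * I0 \<le> A i" "2 * \<mu>m * r\<^sup>2 * I0 \<le> B i" "0 \<le> I0"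
        using adm[OF i(2)] unfolding i(1) I0_def by auto
      have "s * (2 * \<mu>m * r\<^sup>2 * I0) \<le> s * B i" using h S by (intro mult_left_mono) auto
      moreover have "0 \<le> 1/2 * r\<^sup>2 * I0 * (\<kappa> * b + 4 * \<mu>m * s)"
        using h r sgt' by (intro mult_nonneg_nonneg) auto
      moreover have "1/2 * r\<^sup>2 * I0 * (\<kappa> * b + 4 * \<mu>m * s) = 1/2 * r\<^sup>2 * \<kappa> * b * I0 + s * (2 * \<mu>m * r\<^sup>2 * I0)"
        by (simp add: algebra_simps)
      ultimately show "0 \<le> A i + s * B i" using h by linarith
    qed
    then show False using S by simp
  qed
  show ?thesis
  proof (intro conjI)
    show "0 < lam b g \<rho>p \<rho>m \<mu>p \<mu>m \<sigma>p \<sigma>m r" using S by (simp add: s_def)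
    show "(lam b g \<rho>p \<rho>m \<mu>p \<mu>m \<sigma>p \<sigma>m r)\<^sup>2 \<le> r\<^sup>2 * (g*(\<rho>p-\<rho>m) - \<sigma>m*r\<^sup>2) * b / \<rho>m"
      using sL unfolding s_def L_def \<kappa>_def by simp
    show "lam b g \<rho>p \<rho>m \<mu>p \<mu>m \<sigma>p \<sigma>m r \<le> (g*(\<rho>p-\<rho>m) - \<sigma>m*r\<^sup>2) * b / (4*\<mu>m)"
      using sK unfolding s_def \<kappa>_def by simp
  qed
qed



theorem proposition2p3:
  fixes b g \<rho>p \<rho>m \<mu>p \<mu>m \<sigma>p \<sigma>m :: real
  assumes "b > 0" "g > 0" "\<rho>p > \<rho>m" "\<rho>m > 0" "\<mu>p > 0" "\<mu>m > 0"
    and "\<sigma>p \<ge> 0" "\<sigma>m \<ge> 0"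
    and "(\<sigma>p = 0 \<and> \<sigma>m = 0) \<or> (\<sigma>p > 0 \<and> \<sigma>m > 0)"
  shows "(\<forall>r. 0 < r \<and> below_crit g \<rho>p \<rho>m \<sigma>m r \<longrightarrow>
            lam b g \<rho>p \<rho>m \<mu>p \<mu>m \<sigma>p \<sigma>m r \<le> b * g * (\<rho>p - \<rho>m) / (4 * \<mu>m))
      \<and> (lam b g \<rho>p \<rho>m \<mu>p \<mu>m \<sigma>p \<sigma>m \<longlongrightarrow> 0) (at_right 0)
      \<and> (\<sigma>m > 0 \<longrightarrow>
          (lam b g \<rho>p \<rho>m \<mu>p \<mu>m \<sigma>p \<sigma>m \<longlongrightarrow> 0) (at_left (sqrt (g * (\<rho>p - \<rho>m) / \<sigma>m))))"
proof -
  let ?lam = "lam b g \<rho>p \<rho>m \<mu>p \<mu>m \<sigma>p \<sigma>m"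
  define U where "U r = sqrt (r\<^sup>2 * (g*(\<rho>p-\<rho>m) - \<sigma>m*r\<^sup>2) * b / \<rho>m)" for r
  have gr: "g * (\<rho>p - \<rho>m) > 0" using assms by simp
  have K: "0 < ?lam r \<and> ?lam r \<le> U r \<and> ?lam r \<le> b * g * (\<rho>p - \<rho>m) / (4 * \<mu>m)"
    if r: "0 < r" and bc: "below_crit g \<rho>p \<rho>m \<sigma>m r" for r
  proof -
    have kap: "\<sigma>m * r\<^sup>2 - g*(\<rho>p-\<rho>m) < 0"
    proof (cases "\<sigma>m = 0")
      case True then show ?thesis using gr by simp
    next
      case False
      then have sm: "\<sigma>m > 0" using assms by simp
      with bc have "r < sqrt (g*(\<rho>p-\<rho>m)/\<sigma>m)" by (simp add: below_crit_def)
      then have "r\<^sup>2 < (sqrt (g*(\<rho>p-\<rho>m)/\<sigma>m))\<^sup>2" using r by (intro power_strict_mono) auto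
      also have "\<dots> = g*(\<rho>p-\<rho>m)/\<sigma>m" using gr sm by (intro real_sqrt_pow2) simp
      finally have "r\<^sup>2 < g*(\<rho>p-\<rho>m)/\<sigma>m" .
      then have "\<sigma>m * r\<^sup>2 < g*(\<rho>p-\<rho>m)" using sm by (simp add: field_simps)
      then show ?thesis by simp
    qed
    have k: "0 < ?lam r \<and> (?lam r)\<^sup>2 \<le> r\<^sup>2 * (g*(\<rho>p-\<rho>m) - \<sigma>m*r\<^sup>2) * b / \<rho>m \<and>
         ?lam r \<le> (g*(\<rho>p-\<rho>m) - \<sigma>m*r\<^sup>2) * b / (4*\<mu>m)"
      using key[of b g \<rho>m \<rho>p \<mu>p \<mu>m \<sigma>p r \<sigma>m] assms r kap by simp
    have "?lam r = sqrt ((?lam r)\<^sup>2)" using k by simp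
    also have "\<dots> \<le> U r" unfolding U_def using k by (intro real_sqrt_le_mono) simp
    finally have u: "?lam r \<le> U r" .
    have "(g*(\<rho>p-\<rho>m) - \<sigma>m*r\<^sup>2) * b \<le> (g*(\<rho>p-\<rho>m)) * b"
      using assms by (intro mult_right_mono) auto
    then have "(g*(\<rho>p-\<rho>m) - \<sigma>m*r\<^sup>2) * b / (4*\<mu>m) \<le> (g*(\<rho>p-\<rho>m)) * b / (4*\<mu>m)"
      using assms by (intro divide_right_mono) auto
    also have "\<dots> = b * g * (\<rho>p - \<rho>m) / (4 * \<mu>m)" by (simp add: ac_simps)
    finally show ?thesis using k u by linarith
  qed
  have P1: "\<forall>r. 0 < r \<and> below_crit g \<rho>p \<rho>m \<sigma>m r \<longrightarrow> ?lam r \<le> b * g * (\<rho>p - \<rho>m) / (4 * \<mu>m)"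
    using K by blast
  define \<xi> where "\<xi> = (if \<sigma>m = 0 then 1 else sqrt (g * (\<rho>p - \<rho>m) / \<sigma>m))"
  have \<xi>p: "\<xi> > 0" using gr assms by (auto simp: \<xi>_def)
  have bcy: "below_crit g \<rho>p \<rho>m \<sigma>m y" if "y < \<xi>" for y
    using that by (auto simp: \<xi>_def below_crit_def split: if_splits)
  have P2: "(?lam \<longlongrightarrow> 0) (at_right 0)"
  proof (rule tendsto_sandwich[where f="\<lambda>_. 0" and h=U])
    have ev: "eventually (\<lambda>r. 0 < r \<and> below_crit g \<rho>p \<rho>m \<sigma>m r) (at_right 0)"
      unfolding eventually_at_right_field using \<xi>p bcy by blast
    show "eventually (\<lambda>r. 0 \<le> ?lam r) (at_right 0)"
      using ev by eventually_elim (use K in force)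
    show "eventually (\<lambda>r. ?lam r \<le> U r) (at_right 0)"
      using ev by eventually_elim (use K in blast)
    show "((\<lambda>_. 0) \<longlongrightarrow> (0::real)) (at_right 0)" by simp
    have "(U \<longlongrightarrow> U 0) (at_right 0)" unfolding U_def using assms by (intro tendsto_intros) auto
    then show "(U \<longlongrightarrow> 0) (at_right 0)" by (simp add: U_def)
  qed
  have P3: "(?lam \<longlongrightarrow> 0) (at_left (sqrt (g * (\<rho>p - \<rho>m) / \<sigma>m)))" if sm: "\<sigma>m > 0"
  proof -
    have xi: "\<xi> = sqrt (g * (\<rho>p - \<rho>m) / \<sigma>m)" using sm by (simp add: \<xi>_def)
    have xi2: "\<sigma>m * \<xi>\<^sup>2 = g * (\<rho>p - \<rho>m)" unfolding xi using sm gr by simp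
    show ?thesis unfolding xi[symmetric]
    proof (rule tendsto_sandwich[where f="\<lambda>_. 0" and h=U])
      have ev: "eventually (\<lambda>r. 0 < r \<and> below_crit g \<rho>p \<rho>m \<sigma>m r) (at_left \<xi>)"
        unfolding eventually_at_left_field using \<xi>p bcy by blast
      show "eventually (\<lambda>r. 0 \<le> ?lam r) (at_left \<xi>)"
        using ev by eventually_elim (use K in force)
      show "eventually (\<lambda>r. ?lam r \<le> U r) (at_left \<xi>)"
        using ev by eventually_elim (use K in blast)
      show "((\<lambda>_. 0) \<longlongrightarrow> (0::real)) (at_left \<xi>)" by simp
      have "(U \<longlongrightarrow> U \<xi>) (at_left \<xi>)" unfolding U_def using assms by (intro tendsto_intros) auto
      moreover have "U \<xi> = 0" unfolding U_def using xi2 by simp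
      ultimately show "(U \<longlongrightarrow> 0) (at_left \<xi>)" by simp
    qed
  qed
  show ?thesis using P1 P2 P3 by blast
qed

end
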